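(* Let $G=(V,E)$ be a finite simple graph and let $C\subseteq V$. Let $x$ be an optimal solution of the integer program $$\text{minimize }\sum_{v\in V}x_v\ \text{ subject to }\ \sum_{v\in V}x_v\geq1,\quad x_u-x_v+\sum_{w\in N(u)\setminus\{v\}}x_w\geq0\ \ \forall v\in V,\ u\in N(v),\quad x_v=0\ \ \forall v\in C,\quad x\in\{0,1\}^V,$$ and let $F=\{v\in V\colon x_v=1\}$. Then $F$ is a fort of $G$ with $F\subseteq V\setminus\mathrm{cl}(C)$, and $F$ has minimum cardinality among all forts of $G$ contained in $V\setminus\mathrm{cl}(C)$.
   Context: $N(u)$ denotes the neighborhood of $u$. A fort of $G$ is a non-empty set $F\subseteq V$ such that no vertex $u\in V\setminus F$ has exactly one neighbor in $F$. The closure $\mathrm{cl}(C)$ is the set of filled vertices obtained by starting with the vertices of $C$ filled and repeatedly applying the standard color change rule (a filled vertex $u$ forces a non-filled vertex $v$ to become filled if $v$ is the only non-filled neighbor of $u$) until no more forces are possible. *)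

theory Defs
  imports Main
begin

definition simple_graph :: "'a set \<Rightarrow> ('a \<Rightarrow> 'a \<Rightarrow> bool) \<Rightarrow> bool" where
  "simple_graph V E \<longleftrightarrow> finite V \<and> (\<forall>u v. E u v \<longrightarrow> E v u)
     \<and> (\<forall>u. \<not> E u u) \<and> (\<forall>u v. E u v \<longrightarrow> u \<in> V \<and> v \<in> V)"

definition nbhd :: "'a set \<Rightarrow> ('a \<Rightarrow> 'a \<Rightarrow> bool) \<Rightarrow> 'a \<Rightarrow> 'a set" where
  "nbhd V E u = {w \<in> V. E u w}"

definition is_fort :: "'a set \<Rightarrow> ('a \<Rightarrow> 'a \<Rightarrow> bool) \<Rightarrow> 'a set \<Rightarrow> bool" where
  "is_fort V E F \<longleftrightarrow> F \<noteq> {} \<and> F \<subseteq> V \<and>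
     (\<forall>u \<in> V - F. card (nbhd V E u \<inter> F) \<noteq> 1)"

inductive_set zf_closure :: "'a set \<Rightarrow> ('a \<Rightarrow> 'a \<Rightarrow> bool) \<Rightarrow> 'a set \<Rightarrow> 'a set"
  for V E C where
  base: "v \<in> C \<Longrightarrow> v \<in> zf_closure V E C"
| force: "u \<in> zf_closure V E C \<Longrightarrow> v \<in> nbhd V E u \<Longrightarrow>
          (\<And>w. w \<in> nbhd V E u \<Longrightarrow> w \<noteq> v \<Longrightarrow> w \<in> zf_closure V E C) \<Longrightarrow> v \<in> zf_closure V E C"

definition ip_feasible :: "'a set \<Rightarrow> ('a \<Rightarrow> 'a \<Rightarrow> bool) \<Rightarrow> 'a set \<Rightarrow> ('a \<Rightarrow> int) \<Rightarrow> bool" where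
  "ip_feasible V E C x \<longleftrightarrow>
     (\<forall>v \<in> V. x v \<in> {0, 1}) \<and>
     (\<Sum>v\<in>V. x v) \<ge> 1 \<and>
     (\<forall>v \<in> V. \<forall>u \<in> nbhd V E v. x u - x v + (\<Sum>w\<in>nbhd V E u - {v}. x w) \<ge> 0) \<and>
     (\<forall>v \<in> C. x v = 0)"

definition ip_optimal :: "'a set \<Rightarrow> ('a \<Rightarrow> 'a \<Rightarrow> bool) \<Rightarrow> 'a set \<Rightarrow> ('a \<Rightarrow> int) \<Rightarrow> bool" where
  "ip_optimal V E C x \<longleftrightarrow> ip_feasible V E C x \<and>
     (\<forall>y. ip_feasible V E C y \<longrightarrow> (\<Sum>v\<in>V. x v) \<le> (\<Sum>v\<in>V. y v))"

end

theory Submission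
  imports Defs
begin

lemma sum01:
  assumes "finite S" "\<forall>w\<in>S. x w \<in> {0, 1::int}"
  shows "(\<Sum>w\<in>S. x w) = int (card {w\<in>S. x w = 1})"
proof -
  have "(\<Sum>w\<in>S. x w) = (\<Sum>w\<in>S. if x w = 1 then 1 else 0)"
    using assms(2) by (intro sum.cong) auto
  also have "\<dots> = int (card {w\<in>S. x w = 1})"
    using assms(1) by (simp add: sum.If_cases Int_def)
  finally show ?thesis .
qed

lemma nbhd_sub: "nbhd V E u \<subseteq> V" by (auto simp: nbhd_def)

lemma fort_feasible:
  assumes g: "simple_graph V E" and f: "is_fort V E F" and c: "F \<inter> C = {}"
  shows "ip_feasible V E C (\<lambda>v. if v \<in> F then 1 else 0)"
proof -
  let ?x = "\<lambda>v. if v \<in> F then 1 else (0::int)"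
  have fin: "finite V" using g by (simp add: simple_graph_def)
  have FV: "F \<subseteq> V" "F \<noteq> {}" using f by (auto simp: is_fort_def)
  have finF: "finite F" using FV fin finite_subset by blast
  have s: "\<And>S. S \<subseteq> V \<Longrightarrow> (\<Sum>w\<in>S. ?x w) = int (card (S \<inter> F))"
  proof -
    fix S assume "S \<subseteq> V"
    hence "finite S" using fin finite_subset by blast
    thus "(\<Sum>w\<in>S. ?x w) = int (card (S \<inter> F))"
      by (simp add: sum.If_cases)
  qed
  have "(\<Sum>v\<in>V. ?x v) = int (card F)" using s[of V] FV by (simp add: Int_absorb1)
  moreover have "card F \<ge> 1" using finF FV by (simp add: Suc_le_eq card_gt_0_iff)
  ultimately have one: "(\<Sum>v\<in>V. ?x v) \<ge> 1" by simp
  have cons: "\<forall>v \<in> V. \<forall>u \<in> nbhd V E v. ?x u - ?x v + (\<Sum>w\<in>nbhd V E u - {v}. ?x w) \<ge> 0"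
  proof (intro ballI)
    fix v u assume v: "v \<in> V" and u: "u \<in> nbhd V E v"
    have nn: "(\<Sum>w\<in>nbhd V E u - {v}. ?x w) \<ge> 0" by (intro sum_nonneg) auto
    show "?x u - ?x v + (\<Sum>w\<in>nbhd V E u - {v}. ?x w) \<ge> 0"
    proof (cases "u \<in> F \<or> v \<notin> F")
      case True thus ?thesis using nn by auto
    next
      case False
      hence uF: "u \<notin> F" and vF: "v \<in> F" by auto
      have uV: "u \<in> V" using u by (simp add: nbhd_def)
      have "E v u" using u by (simp add: nbhd_def)
      hence "E u v" using g by (simp add: simple_graph_def)
      hence vn: "v \<in> nbhd V E u \<inter> F" using v vF by (simp add: nbhd_def)
      have ne: "card (nbhd V E u \<inter> F) \<noteq> 1" using f uV uF by (simp add: is_fort_def)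
      have finN: "finite (nbhd V E u \<inter> F)" using finF by simp
      have "card (nbhd V E u \<inter> F) \<ge> 1" using vn finN
        by (metis One_nat_def Suc_leI card_gt_0_iff empty_iff)
      hence "card (nbhd V E u \<inter> F) \<ge> 2" using ne by simp
      hence "card ((nbhd V E u \<inter> F) - {v}) \<ge> 1" using vn finN by (simp add: card_Diff_singleton)
      moreover have "(nbhd V E u \<inter> F) - {v} = (nbhd V E u - {v}) \<inter> F" by blast
      moreover have "(\<Sum>w\<in>nbhd V E u - {v}. ?x w) = int (card ((nbhd V E u - {v}) \<inter> F))"
        using s[of "nbhd V E u - {v}"] nbhd_sub[of V E u] by blast
      ultimately show ?thesis using uF vF by simp
    qed
  qed
  show ?thesis unfolding ip_feasible_def using one cons c by auto
qed

lemma closure_not_in: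
  assumes f: "is_fort V E F" and c: "F \<inter> C = {}" and cv: "C \<subseteq> V"
  shows "v \<in> zf_closure V E C \<Longrightarrow> v \<in> V \<and> v \<notin> F"
proof (induction rule: zf_closure.induct)
  case (base v) thus ?case using c cv by auto
next
  case (force u v)
  have vV: "v \<in> V" using force(2) by (simp add: nbhd_def)
  have "v \<notin> F"
  proof
    assume vF: "v \<in> F"
    have o: "\<forall>w\<in>nbhd V E u. w \<noteq> v \<longrightarrow> w \<notin> F" using force by blast
    have "nbhd V E u \<inter> F = {v}" using o force(2) vF by auto
    moreover have uu: "u \<in> V \<and> u \<notin> F" using force by blast
    ultimately show False
    proof -
      assume e: "nbhd V E u \<inter> F = {v}" and uu: "u \<in> V \<and> u \<notin> F"
      have "u \<in> V - F" using uu by blast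
      hence "card (nbhd V E u \<inter> F) \<noteq> 1" using f unfolding is_fort_def by blast
      thus False using e by simp
    qed
  qed
  thus ?case using vV by simp
qed

theorem corollary5p4:
  fixes V :: "'a set" and E :: "'a \<Rightarrow> 'a \<Rightarrow> bool" and C :: "'a set" and x :: "'a \<Rightarrow> int"
  assumes "simple_graph V E"
    and "C \<subseteq> V"
    and "ip_optimal V E C x"
  shows "is_fort V E {v \<in> V. x v = 1}
       \<and> {v \<in> V. x v = 1} \<subseteq> V - zf_closure V E C
       \<and> (\<forall>F'. is_fort V E F' \<and> F' \<subseteq> V - zf_closure V E C
              \<longrightarrow> card {v \<in> V. x v = 1} \<le> card F')"
proof -
  let ?F = "{v \<in> V. x v = 1}"
  have g: "simple_graph V E" by fact
  have fin: "finite V" using g by (simp add: simple_graph_def)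
  have feas: "ip_feasible V E C x" and opt: "\<And>y. ip_feasible V E C y \<Longrightarrow> (\<Sum>v\<in>V. x v) \<le> (\<Sum>v\<in>V. y v)"
    using assms(3) by (auto simp: ip_optimal_def)
  have x01: "\<forall>v\<in>V. x v \<in> {0, 1}" and sum1: "(\<Sum>v\<in>V. x v) \<ge> 1"
    and cons: "\<forall>v \<in> V. \<forall>u \<in> nbhd V E v. x u - x v + (\<Sum>w\<in>nbhd V E u - {v}. x w) \<ge> 0"
    and xc: "\<forall>v \<in> C. x v = 0"
    using feas by (auto simp: ip_feasible_def)
  have sumF: "(\<Sum>v\<in>V. x v) = int (card ?F)" using sum01[OF fin x01] .
  have fort: "is_fort V E ?F"
    unfolding is_fort_def
  proof (intro conjI ballI)
    show "?F \<noteq> {}"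
    proof
      assume e: "?F = {}"
      have "card ?F = 0" by (subst e) simp
      hence "(\<Sum>v\<in>V. x v) = 0" using sumF by simp
      thus False using sum1 by simp
    qed
    show "?F \<subseteq> V" by auto
    fix u assume u: "u \<in> V - ?F"
    hence xu: "x u = 0" using x01 by auto
    show "card (nbhd V E u \<inter> ?F) \<noteq> 1"
    proof
      assume "card (nbhd V E u \<inter> ?F) = 1"
      then obtain v where vv: "nbhd V E u \<inter> ?F = {v}" by (auto simp: card_Suc_eq)
      hence v: "v \<in> V" "x v = 1" "E u v" by (auto simp: nbhd_def)
      have "E v u" using v(3) g by (simp add: simple_graph_def)
      hence un: "u \<in> nbhd V E v" using u by (simp add: nbhd_def)
      have sub: "nbhd V E u - {v} \<subseteq> V" using nbhd_sub[of V E u] by blast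
      have "finite (nbhd V E u - {v})" using sub fin finite_subset by blast
      moreover have "\<forall>w\<in>nbhd V E u - {v}. x w \<in> {0,1}" using sub x01 by blast
      ultimately have "(\<Sum>w\<in>nbhd V E u - {v}. x w) = int (card {w\<in>nbhd V E u - {v}. x w = 1})"
        by (rule sum01)
      moreover have "{w\<in>nbhd V E u - {v}. x w = 1} = {}" using vv sub by blast
      ultimately have "(\<Sum>w\<in>nbhd V E u - {v}. x w) = 0" by (metis card.empty of_nat_0)
      thus False using cons v(1) un xu v(2) by fastforce
    qed
  qed
  have disj: "?F \<inter> C = {}" using xc by auto
  have sub: "?F \<subseteq> V - zf_closure V E C"
    using closure_not_in[OF fort disj assms(2)] by blast
  have minimal: "\<forall>F'. is_fort V E F' \<and> F' \<subseteq> V - zf_closure V E C \<longrightarrow> card ?F \<le> card F'"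
  proof (intro allI impI)
    fix F' assume h: "is_fort V E F' \<and> F' \<subseteq> V - zf_closure V E C"
    have "C \<subseteq> zf_closure V E C" by (auto intro: zf_closure.base)
    hence d: "F' \<inter> C = {}" using h by blast
    have F'V: "F' \<subseteq> V" using h by blast
    have "(\<Sum>v\<in>V. x v) \<le> (\<Sum>v\<in>V. if v \<in> F' then 1 else 0)"
      using opt[OF fort_feasible[OF g _ d]] h by blast
    also have "\<dots> = int (card (V \<inter> F'))" using fin by (simp add: sum.If_cases)
    also have "V \<inter> F' = F'" using F'V by blast
    finally show "card ?F \<le> card F'" using sumF by simp
  qed
  show ?thesis using fort sub minimal by blast
qed

end
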